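(* Let $d$ be a feasible integer and let $P\in\mathbb F[\lambda]$ be any monic polynomial of degree $d$. Then there exists a standard $U_q(\widehat{\mathfrak{sl}}_2)$-module $V$ of diameter $d$ with $P_V=P$.
   Context: Let $\mathbb F$ be an algebraically closed field and fix nonzero $q\in\mathbb F$ with $q^2\ne1$; write $[n]_q=(q^n-q^{-n})/(q-q^{-1})$. $U_q(\widehat{\mathfrak{sl}}_2)$ is the associative unital $\mathbb F$-algebra with generators $e_i^{\pm},K_i^{\pm1}$ ($i\in\{0,1\}$) and relations $K_iK_i^{-1}=K_i^{-1}K_i=1$, $K_0K_1=K_1K_0$, $K_ie_i^{\pm}K_i^{-1}=q^{\pm2}e_i^{\pm}$, $K_ie_j^{\pm}K_i^{-1}=q^{\mp2}e_j^{\pm}$ ($i\ne j$), $e_i^+e_i^--e_i^-e_i^+=(K_i-K_i^{-1})/(q-q^{-1})$, $e_0^{\pm}e_1^{\mp}=e_1^{\mp}e_0^{\pm}$, and $(e_i^\pm)^3e_j^\pm-[3]_q(e_i^\pm)^2e_j^\pm e_i^\pm+[3]_qe_i^\pm e_j^\pm(e_i^\pm)^2-e_j^\pm(e_i^\pm)^3=0$ ($i\ne j$). Tensor products of modules are formed via $e_i^+(v\otimes w)=e_i^+v\otimes K_iw+v\otimes e_i^+w$, $e_i^-(v\otimes w)=e_i^-v\otimes w+K_i^{-1}v\otimes e_i^-w$, $K_i(v\otimes w)=K_iv\otimes K_iw$. For nonzero $\alpha\in\mathbb F$, $V(\alpha)$ is the module with basis $x,y$ and $K_1x=qx$, $K_1y=q^{-1}y$,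 $e_1^-x=y$, $e_1^-y=0$, $e_1^+x=0$, $e_1^+y=x$, $K_0x=q^{-1}x$, $K_0y=qy$, $e_0^-x=0$, $e_0^-y=q\alpha^{-1}x$, $e_0^+x=q^{-1}\alpha y$, $e_0^+y=0$. A standard module of diameter $d$ is $V(\alpha_1)\otimes\cdots\otimes V(\alpha_d)$ with all $\alpha_i\in\mathbb F$ nonzero (for $d=0$: the trivial module, on which each $e_i^\pm$ acts as $0$ and each $K_i^{\pm1}$ as $1$). An integer $d$ is feasible if $d\ge0$ and $q^{2i}\ne1$ for $1\le i\le d$. For a standard $V$ of diameter $d$, $U_0$ is the $1$-dimensional span of $x\otimes\cdots\otimes x$. Fix nonzero $b,c,b^*,c^*\in\mathbb F$ and $u,v,u^*,v^*\in\mathbb F$ with $uv^*=-bb^*q^{-1}(q-q^{-1})^2$ and $vu^*=-cc^*q^{-1}(q-q^{-1})^2$; set $R=ue_0^++ve_1^-K_1$ and $L=u^*e_1^++v^*e_0^-K_0$. For a standard module $V$ of feasible diameter $d$ and $0\le i\le d$, $\zeta_i$ is the scalar by which $L^iR^i$ acts on $U_0$, and $\sigma_i=\zeta_i/\prod_{k=1}^i(q^k-q^{-k})^2$. For $i\ge0$ let $f_i=bb^*q^{-2i}+cc^*q^{2i}-\lambda\in\mathbb F[\lambda]$. The Drinfel'd polynomial of $V$ is the monic degree-$d$ polynomial $P_V=(-1)^d\sum_{i=0}^d\sigma_{d-i}f_0f_1\cdots f_{i-1}$. *)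

theory Defs
  imports "HOL-Computational_Algebra.Polynomial"
begin

text \<open>Vectors of the standard module V(al_1) (x) ... (x) V(al_d) are represented as
  coefficient functions on basis words: a word is a bool list of length d,
  True standing for x and False for y in the corresponding tensor factor
  (head of the list = first factor).  Index i :: nat is 0 or 1.\<close>

definition bvec :: "bool list \<Rightarrow> bool list \<Rightarrow> 'a::field" where
  "bvec w = (\<lambda>u. if u = w then 1 else 0)"

text \<open>Eigenvalue of K_i on x (True) and y (False) in V(al).\<close>
definition keig :: "'a::field \<Rightarrow> nat \<Rightarrow> bool \<Rightarrow> 'a" where
  "keig q i a = (if i = 1 then (if a then q else inverse q) else (if a then inverse q else q))"

definition Kw :: "'a::field \<Rightarrow> nat \<Rightarrow> bool list \<Rightarrow> 'a" where
  "Kw q i w = prod_list (map (keig q i) w)"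

text \<open>Action of e_i^+ and e_i^- on the basis vector a of V(al), as a vector of V(al).\<close>
definition ep1 :: "'a::field \<Rightarrow> nat \<Rightarrow> 'a \<Rightarrow> bool \<Rightarrow> bool \<Rightarrow> 'a" where
  "ep1 q i al a = (\<lambda>b. if i = 1 then (if \<not> a \<and> b then 1 else 0)
                         else (if a \<and> \<not> b then inverse q * al else 0))"

definition em1 :: "'a::field \<Rightarrow> nat \<Rightarrow> 'a \<Rightarrow> bool \<Rightarrow> bool \<Rightarrow> 'a" where
  "em1 q i al a = (\<lambda>b. if i = 1 then (if a \<and> \<not> b then 1 else 0)
                         else (if \<not> a \<and> b then q * inverse al else 0))"

text \<open>Action of e_i^+ and e_i^- on the basis word w of V(al_1) (x) ... (x) V(al_d),
  via the coproduct: e^+(v(x)w) = e^+v (x) K w + v (x) e^+ w,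
  e^-(v(x)w) = e^-v (x) w + K^{-1}v (x) e^- w.\<close>
fun ep :: "'a::field \<Rightarrow> nat \<Rightarrow> 'a list \<Rightarrow> bool list \<Rightarrow> bool list \<Rightarrow> 'a" where
  "ep q i (al # als) (a # w) =
     (\<lambda>t. case t of [] \<Rightarrow> 0
        | b # u \<Rightarrow> ep1 q i al a b * (if u = w then Kw q i w else 0)
                 + (if b = a then 1 else 0) * ep q i als w u)"
| "ep q i _ _ = (\<lambda>t. 0)"

fun em :: "'a::field \<Rightarrow> nat \<Rightarrow> 'a list \<Rightarrow> bool list \<Rightarrow> bool list \<Rightarrow> 'a" where
  "em q i (al # als) (a # w) =
     (\<lambda>t. case t of [] \<Rightarrow> 0
        | b # u \<Rightarrow> em1 q i al a b * (if u = w then 1 else 0)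
                 + (if b = a then inverse (keig q i a) else 0) * em q i als w u)"
| "em q i _ _ = (\<lambda>t. 0)"

definition apply_op :: "nat \<Rightarrow> (bool list \<Rightarrow> bool list \<Rightarrow> 'a::field) \<Rightarrow> (bool list \<Rightarrow> 'a) \<Rightarrow> bool list \<Rightarrow> 'a" where
  "apply_op d A f = (\<lambda>t. \<Sum>w\<in>{w. length w = d}. f w * A w t)"

definition Rop :: "'a::field \<Rightarrow> 'a \<Rightarrow> 'a \<Rightarrow> 'a list \<Rightarrow> bool list \<Rightarrow> bool list \<Rightarrow> 'a" where
  "Rop q u v als w = (\<lambda>t. u * ep q 0 als w t + v * Kw q 1 w * em q 1 als w t)"

definition Lop :: "'a::field \<Rightarrow> 'a \<Rightarrow> 'a \<Rightarrow> 'a list \<Rightarrow> bool list \<Rightarrow> bool list \<Rightarrow> 'a" where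
  "Lop q us vs als w = (\<lambda>t. us * ep q 1 als w t + vs * Kw q 0 w * em q 0 als w t)"

text \<open>zeta_i: the scalar by which L^i R^i acts on U_0 = span(x (x) ... (x) x), read off as
  the coefficient of x(x)...(x)x in L^i R^i (x(x)...(x)x).\<close>
definition zeta :: "'a::field \<Rightarrow> 'a \<Rightarrow> 'a \<Rightarrow> 'a \<Rightarrow> 'a \<Rightarrow> 'a list \<Rightarrow> nat \<Rightarrow> 'a" where
  "zeta q u v us vs als i =
     (let d = length als; x0 = replicate d True in
      ((apply_op d (Lop q us vs als) ^^ i) ((apply_op d (Rop q u v als) ^^ i) (bvec x0))) x0)"

definition sigma :: "'a::field \<Rightarrow> 'a \<Rightarrow> 'a \<Rightarrow> 'a \<Rightarrow> 'a \<Rightarrow> 'a list \<Rightarrow> nat \<Rightarrow> 'a" where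
  "sigma q u v us vs als i =
     zeta q u v us vs als i / (\<Prod>k=1..i. (q ^ k - inverse q ^ k) ^ 2)"

definition fpoly :: "'a::field \<Rightarrow> 'a \<Rightarrow> 'a \<Rightarrow> 'a \<Rightarrow> 'a \<Rightarrow> nat \<Rightarrow> 'a poly" where
  "fpoly q b c bs cs i = [: b * bs * inverse q ^ (2 * i) + c * cs * q ^ (2 * i), -1 :]"

definition drinfeld_poly ::
  "'a::field \<Rightarrow> 'a \<Rightarrow> 'a \<Rightarrow> 'a \<Rightarrow> 'a \<Rightarrow> 'a \<Rightarrow> 'a \<Rightarrow> 'a \<Rightarrow> 'a \<Rightarrow> 'a list \<Rightarrow> 'a poly" where
  "drinfeld_poly q b c bs cs u v us vs als =
     (let d = length als in
      smult ((-1) ^ d)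
        (\<Sum>i=0..d. smult (sigma q u v us vs als (d - i)) (\<Prod>j<i. fpoly q b c bs cs j)))"

definition feasible :: "'a::field \<Rightarrow> nat \<Rightarrow> bool" where
  "feasible q d \<longleftrightarrow> (\<forall>i\<in>{1..d}. q ^ (2 * i) \<noteq> 1)"

end

theory Submission
  imports Defs
begin


lemma keig_nz: "q \<noteq> 0 \<Longrightarrow> keig q i a \<noteq> (0::'a::field)"
  by (simp add: keig_def)

lemma Kw_Cons[simp]: "Kw q i (a # w) = keig q i a * Kw q i w"
  by (simp add: Kw_def)
lemma Kw_Nil[simp]: "Kw q i [] = 1"
  by (simp add: Kw_def)

lemma ep_comm:
  assumes "q \<noteq> (0::'a::field)"
  shows "Kw q j t * ep q i als w t = (if (i=1) = (j=1) then q^2 else inverse q^2) * Kw q j w * ep q i als w t"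
proof (induction q i als w arbitrary: t rule: ep.induct)
  case (1 q i al als a w)
  show ?case
  proof (cases t)
    case Nil then show ?thesis by simp
  next
    case (Cons b u)
    have h1: "keig q j b * ep1 q i al a b = (if (i=1) = (j=1) then q^2 else inverse q^2) * keig q j a * ep1 q i al a b"
      using assms by (cases a; cases b; auto simp: keig_def ep1_def field_simps power2_eq_square)
    show ?thesis using Cons 1[of u] h1
      by (auto simp: algebra_simps)
  qed
qed auto

lemma em_comm:
  assumes "q \<noteq> (0::'a::field)"
  shows "Kw q j t * em q i als w t = (if (i=1) = (j=1) then inverse q^2 else q^2) * Kw q j w * em q i als w t"
proof (induction q i als w arbitrary: t rule: em.induct)
  case (1 q i al als a w)
  show ?case
  proof (cases t)
    case Nil then show ?thesis by simp
  next
    case (Cons b u)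
    have h1: "keig q j b * em1 q i al a b = (if (i=1) = (j=1) then inverse q^2 else q^2) * keig q j a * em1 q i al a b"
      using assms by (cases a; cases b; auto simp: keig_def em1_def field_simps power2_eq_square)
    show ?thesis using Cons 1[of u] h1
      by (auto simp: algebra_simps)
  qed
qed auto

lemma finite_len: "finite {w::bool list. length w = n}"
  using finite_lists_length_eq[of "UNIV::bool set" n] by simp

lemma len_Suc_set: "{w::bool list. length w = Suc m} = Cons True ` {w. length w = m} \<union> Cons False ` {w. length w = m}"
proof -
  have "\<And>w. length w = Suc m \<Longrightarrow> w \<in> Cons True ` {w. length w = m} \<union> Cons False ` {w. length w = m}"
  proof -
    fix w :: "bool list" assume "length w = Suc m"
    then obtain b u where "w = b # u" "length u = m" by (cases w) auto
    then show "w \<in> Cons True ` {w. length w = m} \<union> Cons False ` {w. length w = m}" by (cases b) auto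
  qed
  then show ?thesis by auto
qed

lemma sum_len_Suc:
  "(\<Sum>w\<in>{w::bool list. length w = Suc m}. h w) = (\<Sum>w\<in>{w. length w = m}. h (True # w)) + (\<Sum>w\<in>{w. length w = m}. h (False # w))"
proof -
  have "(\<Sum>w\<in>{w::bool list. length w = Suc m}. h w) = sum h (Cons True ` {w. length w = m}) + sum h (Cons False ` {w. length w = m})"
    unfolding len_Suc_set by (rule sum.union_disjoint) (auto simp: finite_len)
  also have "\<dots> = (\<Sum>w\<in>{w. length w = m}. h (True # w)) + (\<Sum>w\<in>{w. length w = m}. h (False # w))"
    by (simp add: sum.reindex)
  finally show ?thesis .
qed

definition Ev :: "bool \<Rightarrow> (bool list \<Rightarrow> 'a::field) \<Rightarrow> bool list \<Rightarrow> 'a" where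
  "Ev a g = (\<lambda>t. case t of [] \<Rightarrow> 0 | b # u \<Rightarrow> if b = a then g u else 0)"

lemma Ev_Cons[simp]: "Ev a g (b # u) = (if b = a then g u else 0)"
  by (simp add: Ev_def)

lemma sum_collapse:
  assumes "length u = m"
  shows "(\<Sum>w\<in>{w::bool list. length w = m}. g w * (if u = w then X w else (0::'a::field))) = g u * X u"
proof -
  have "(\<Sum>w\<in>{w::bool list. length w = m}. g w * (if u = w then X w else 0)) = (\<Sum>w\<in>{w::bool list. length w = m}. if u = w then g w * X w else 0)"
    by (rule sum.cong) auto
  also have "\<dots> = g u * X u" using assms by (simp add: sum.delta finite_len)
  finally show ?thesis .
qed

lemma qinv_cancel: "q \<noteq> (0::'a::field) \<Longrightarrow> q * (inverse q * x) = x"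
  "q \<noteq> (0::'a::field) \<Longrightarrow> inverse q * (q * x) = x"
  by (simp_all add: mult.assoc[symmetric])

lemma Rop_Cons: "Rop q u v (al # als) (a # w) (b # x) =
   u * (ep1 q 0 al a b * (if x = w then Kw q 0 w else 0) + (if b = a then 1 else 0) * ep q 0 als w x)
 + v * keig q 1 a * Kw q 1 w * (em1 q 1 al a b * (if x = w then 1 else 0) + (if b = a then inverse (keig q 1 a) else 0) * em q 1 als w x)"
  by (simp add: Rop_def)

lemma Lop_Cons: "Lop q u v (al # als) (a # w) (b # x) =
   u * (ep1 q 1 al a b * (if x = w then Kw q 1 w else 0) + (if b = a then 1 else 0) * ep q 1 als w x)
 + v * keig q 0 a * Kw q 0 w * (em1 q 0 al a b * (if x = w then 1 else 0) + (if b = a then inverse (keig q 0 a) else 0) * em q 0 als w x)"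
  by (simp add: Lop_def)

lemma Rop_diag:
  assumes "q \<noteq> (0::'a::field)"
  shows "Rop q u v (al#als) (True#w) (True#x) = Rop q u v als w x"
    "Rop q u v (al#als) (False#w) (False#x) = Rop q u v als w x"
    "Rop q u v (al#als) (False#w) (True#x) = 0"
  using assms by (simp_all add: Rop_Cons ep1_def em1_def keig_def Rop_def field_simps)

lemma Lop_diag:
  assumes "q \<noteq> (0::'a::field)"
  shows "Lop q u v (al#als) (True#w) (True#x) = Lop q u v als w x"
    "Lop q u v (al#als) (False#w) (False#x) = Lop q u v als w x"
    "Lop q u v (al#als) (True#w) (False#x) = 0"
  using assms by (simp_all add: Lop_Cons ep1_def em1_def keig_def Lop_def field_simps)

lemma R_True:
  assumes q: "q \<noteq> (0::'a::field)" and len: "length t = Suc m"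
  shows "apply_op (Suc m) (Rop q u v (al#als)) (Ev True g) t =
    Ev True (apply_op m (Rop q u v als) g) t + Ev False (\<lambda>w. g w * (u*inverse q*al*Kw q 0 w + v*q*Kw q 1 w)) t"
proof -
  obtain b x where t: "t = b # x" and lx: "length x = m" using len by (cases t) auto
  have "apply_op (Suc m) (Rop q u v (al#als)) (Ev True g) t = (\<Sum>w\<in>{w. length w = m}. g w * Rop q u v (al#als) (True#w) (b#x))"
    by (simp add: apply_op_def sum_len_Suc t)
  also have "\<dots> = Ev True (apply_op m (Rop q u v als) g) t + Ev False (\<lambda>w. g w * (u*inverse q*al*Kw q 0 w + v*q*Kw q 1 w)) t"
  proof (cases b)
    case True
    then show ?thesis using q by (simp add: t Rop_diag apply_op_def)
  next
    case False
    have "(\<Sum>w\<in>{w. length w = m}. g w * Rop q u v (al#als) (True#w) (b#x)) =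
      (\<Sum>w\<in>{w. length w = m}. g w * (if x = w then (u*inverse q*al*Kw q 0 w + v*q*Kw q 1 w) else 0))"
      by (rule sum.cong) (auto simp: False Rop_Cons ep1_def em1_def keig_def)
    also have "\<dots> = g x * (u*inverse q*al*Kw q 0 x + v*q*Kw q 1 x)" by (rule sum_collapse[OF lx])
    finally show ?thesis by (simp add: t False)
  qed
  finally show ?thesis .
qed

lemma R_False:
  assumes q: "q \<noteq> (0::'a::field)" and len: "length t = Suc m"
  shows "apply_op (Suc m) (Rop q u v (al#als)) (Ev False g) t = Ev False (apply_op m (Rop q u v als) g) t"
proof -
  obtain b x where t: "t = b # x" and lx: "length x = m" using len by (cases t) auto
  have "apply_op (Suc m) (Rop q u v (al#als)) (Ev False g) t = (\<Sum>w\<in>{w. length w = m}. g w * Rop q u v (al#als) (False#w) (b#x))"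
    by (simp add: apply_op_def sum_len_Suc t)
  also have "\<dots> = Ev False (apply_op m (Rop q u v als) g) t"
    using q by (cases b) (simp_all add: t Rop_diag apply_op_def)
  finally show ?thesis .
qed

lemma L_True:
  assumes q: "q \<noteq> (0::'a::field)" and len: "length t = Suc m"
  shows "apply_op (Suc m) (Lop q u v (al#als)) (Ev True g) t = Ev True (apply_op m (Lop q u v als) g) t"
proof -
  obtain b x where t: "t = b # x" and lx: "length x = m" using len by (cases t) auto
  have "apply_op (Suc m) (Lop q u v (al#als)) (Ev True g) t = (\<Sum>w\<in>{w. length w = m}. g w * Lop q u v (al#als) (True#w) (b#x))"
    by (simp add: apply_op_def sum_len_Suc t)
  also have "\<dots> = Ev True (apply_op m (Lop q u v als) g) t"
    using q by (cases b) (simp_all add: t Lop_diag apply_op_def)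
  finally show ?thesis .
qed

lemma L_False:
  assumes q: "q \<noteq> (0::'a::field)" and len: "length t = Suc m"
  shows "apply_op (Suc m) (Lop q u v (al#als)) (Ev False g) t =
    Ev False (apply_op m (Lop q u v als) g) t + Ev True (\<lambda>w. g w * (u*Kw q 1 w + v*q*q*inverse al*Kw q 0 w)) t"
proof -
  obtain b x where t: "t = b # x" and lx: "length x = m" using len by (cases t) auto
  have "apply_op (Suc m) (Lop q u v (al#als)) (Ev False g) t = (\<Sum>w\<in>{w. length w = m}. g w * Lop q u v (al#als) (False#w) (b#x))"
    by (simp add: apply_op_def sum_len_Suc t)
  also have "\<dots> = Ev False (apply_op m (Lop q u v als) g) t + Ev True (\<lambda>w. g w * (u*Kw q 1 w + v*q*q*inverse al*Kw q 0 w)) t"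
  proof (cases b)
    case False
    then show ?thesis using q by (simp add: t Lop_diag apply_op_def)
  next
    case True
    have "(\<Sum>w\<in>{w. length w = m}. g w * Lop q u v (al#als) (False#w) (b#x)) =
      (\<Sum>w\<in>{w. length w = m}. g w * (if x = w then (u*Kw q 1 w + v*q*q*inverse al*Kw q 0 w) else 0))"
      by (rule sum.cong) (auto simp: True Lop_Cons ep1_def em1_def keig_def)
    also have "\<dots> = g x * (u*Kw q 1 x + v*q*q*inverse al*Kw q 0 x)" by (rule sum_collapse[OF lx])
    finally show ?thesis by (simp add: t True)
  qed
  finally show ?thesis .
qed

lemma apply_op_lin: "apply_op n A (\<lambda>t. f t + c * g t) = (\<lambda>t. apply_op n A f t + c * apply_op n A (g::bool list \<Rightarrow> 'a::field) t)"
  by (rule ext) (simp add: apply_op_def algebra_simps sum.distrib sum_distrib_left)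

lemma apply_op_pow_lin: "(apply_op n A ^^ k) (\<lambda>t. f t + c * g t) = (\<lambda>t. (apply_op n A ^^ k) f t + c * (apply_op n A ^^ k) (g::bool list \<Rightarrow> 'a::field) t)"
  by (induction k) (simp_all add: apply_op_lin)

lemma apply_op_resp: "(\<And>t. length t = n \<Longrightarrow> f t = g t) \<Longrightarrow> apply_op n A f = apply_op n A (g::bool list \<Rightarrow> 'a::field)"
  by (rule ext) (simp add: apply_op_def)

lemma apply_op_pow_resp: "(\<And>t. length t = n \<Longrightarrow> f t = g t) \<Longrightarrow> (apply_op n A ^^ Suc k) f = (apply_op n A ^^ Suc k) (g::bool list \<Rightarrow> 'a::field)"
  by (simp only: funpow_Suc_right comp_def apply_op_resp[of n f g A])

lemma apply_op_zero: "apply_op n A (\<lambda>t. 0) = (\<lambda>t. (0::'a::field))"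
  by (rule ext) (simp add: apply_op_def)

lemma apply_op_pow_zero: "(apply_op n A ^^ k) (\<lambda>t. 0) = (\<lambda>t. (0::'a::field))"
  by (induction k) (simp_all add: apply_op_zero)

definition Keig :: "'a::field \<Rightarrow> (bool list \<Rightarrow> 'a) \<Rightarrow> 'a \<Rightarrow> 'a \<Rightarrow> bool" where
  "Keig q f k0 k1 \<longleftrightarrow> (\<forall>t. Kw q 0 t * f t = k0 * f t \<and> Kw q 1 t * f t = k1 * f t)"

lemma Rop_comm:
  assumes "q \<noteq> (0::'a::field)"
  shows "Kw q 0 t * Rop q u v als w t = q^2 * Kw q 0 w * Rop q u v als w t"
    "Kw q 1 t * Rop q u v als w t = inverse q^2 * Kw q 1 w * Rop q u v als w t"
proof -
  have e1: "Kw q 0 t * ep q 0 als w t = q^2 * Kw q 0 w * ep q 0 als w t"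
    using ep_comm[OF assms, of 0 t 0 als w] by simp
  have e2: "Kw q 0 t * em q 1 als w t = q^2 * Kw q 0 w * em q 1 als w t"
    using em_comm[OF assms, of 0 t 1 als w] by simp
  have e3: "Kw q 1 t * ep q 0 als w t = inverse q^2 * Kw q 1 w * ep q 0 als w t"
    using ep_comm[OF assms, of 1 t 0 als w] by simp
  have e4: "Kw q 1 t * em q 1 als w t = inverse q^2 * Kw q 1 w * em q 1 als w t"
    using em_comm[OF assms, of 1 t 1 als w] by simp
  show "Kw q 0 t * Rop q u v als w t = q^2 * Kw q 0 w * Rop q u v als w t"
    proof -
    have "Kw q 0 t * Rop q u v als w t = u * (Kw q 0 t * ep q 0 als w t) + v * Kw q 1 w * (Kw q 0 t * em q 1 als w t)"
      by (simp add: Rop_def algebra_simps)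
    also have "\<dots> = u * (q^2 * Kw q 0 w * ep q 0 als w t) + v * Kw q 1 w * (q^2 * Kw q 0 w * em q 1 als w t)"
      by (simp only: e1 e2)
    also have "\<dots> = q^2 * Kw q 0 w * Rop q u v als w t" by (simp add: Rop_def algebra_simps)
    finally show ?thesis .
  qed
  show "Kw q 1 t * Rop q u v als w t = inverse q^2 * Kw q 1 w * Rop q u v als w t"
    proof -
    have "Kw q 1 t * Rop q u v als w t = u * (Kw q 1 t * ep q 0 als w t) + v * Kw q 1 w * (Kw q 1 t * em q 1 als w t)"
      by (simp add: Rop_def algebra_simps)
    also have "\<dots> = u * (inverse q^2 * Kw q 1 w * ep q 0 als w t) + v * Kw q 1 w * (inverse q^2 * Kw q 1 w * em q 1 als w t)"
      by (simp only: e3 e4)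
    also have "\<dots> = inverse q^2 * Kw q 1 w * Rop q u v als w t" by (simp add: Rop_def algebra_simps)
    finally show ?thesis .
  qed
qed

lemma Lop_comm:
  assumes "q \<noteq> (0::'a::field)"
  shows "Kw q 0 t * Lop q u v als w t = inverse q^2 * Kw q 0 w * Lop q u v als w t"
    "Kw q 1 t * Lop q u v als w t = q^2 * Kw q 1 w * Lop q u v als w t"
proof -
  have e1: "Kw q 0 t * ep q 1 als w t = inverse q^2 * Kw q 0 w * ep q 1 als w t"
    using ep_comm[OF assms, of 0 t 1 als w] by simp
  have e2: "Kw q 0 t * em q 0 als w t = inverse q^2 * Kw q 0 w * em q 0 als w t"
    using em_comm[OF assms, of 0 t 0 als w] by simp
  have e3: "Kw q 1 t * ep q 1 als w t = q^2 * Kw q 1 w * ep q 1 als w t"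
    using ep_comm[OF assms, of 1 t 1 als w] by simp
  have e4: "Kw q 1 t * em q 0 als w t = q^2 * Kw q 1 w * em q 0 als w t"
    using em_comm[OF assms, of 1 t 0 als w] by simp
  show "Kw q 0 t * Lop q u v als w t = inverse q^2 * Kw q 0 w * Lop q u v als w t"
    proof -
    have "Kw q 0 t * Lop q u v als w t = u * (Kw q 0 t * ep q 1 als w t) + v * Kw q 0 w * (Kw q 0 t * em q 0 als w t)"
      by (simp add: Lop_def algebra_simps)
    also have "\<dots> = u * (inverse q^2 * Kw q 0 w * ep q 1 als w t) + v * Kw q 0 w * (inverse q^2 * Kw q 0 w * em q 0 als w t)"
      by (simp only: e1 e2)
    also have "\<dots> = inverse q^2 * Kw q 0 w * Lop q u v als w t" by (simp add: Lop_def algebra_simps)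
    finally show ?thesis .
  qed
  show "Kw q 1 t * Lop q u v als w t = q^2 * Kw q 1 w * Lop q u v als w t"
    proof -
    have "Kw q 1 t * Lop q u v als w t = u * (Kw q 1 t * ep q 1 als w t) + v * Kw q 0 w * (Kw q 1 t * em q 0 als w t)"
      by (simp add: Lop_def algebra_simps)
    also have "\<dots> = u * (q^2 * Kw q 1 w * ep q 1 als w t) + v * Kw q 0 w * (q^2 * Kw q 1 w * em q 0 als w t)"
      by (simp only: e3 e4)
    also have "\<dots> = q^2 * Kw q 1 w * Lop q u v als w t" by (simp add: Lop_def algebra_simps)
    finally show ?thesis .
  qed
qed

lemma Keig_R:
  assumes q: "q \<noteq> (0::'a::field)" and K: "Keig q f k0 k1"
  shows "Keig q (apply_op n (Rop q u v als) f) (q^2 * k0) (inverse q^2 * k1)"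
  unfolding Keig_def
proof (intro allI conjI)
  fix t
  have "Kw q 0 t * apply_op n (Rop q u v als) f t = (\<Sum>w\<in>{w. length w = n}. f w * (Kw q 0 t * Rop q u v als w t))"
    by (simp add: apply_op_def sum_distrib_left algebra_simps)
  also have "\<dots> = (\<Sum>w\<in>{w. length w = n}. q^2 * ((Kw q 0 w * f w) * Rop q u v als w t))"
    by (rule sum.cong[OF refl], simp only: Rop_comm[OF q], simp add: algebra_simps)
  also have "\<dots> = (\<Sum>w\<in>{w. length w = n}. q^2 * (k0 * f w * Rop q u v als w t))"
    using K unfolding Keig_def by metis
  also have "\<dots> = q^2 * k0 * apply_op n (Rop q u v als) f t"
    by (simp add: apply_op_def sum_distrib_left algebra_simps)
  finally show "Kw q 0 t * apply_op n (Rop q u v als) f t = q^2 * k0 * apply_op n (Rop q u v als) f t" .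
  have "Kw q 1 t * apply_op n (Rop q u v als) f t = (\<Sum>w\<in>{w. length w = n}. f w * (Kw q 1 t * Rop q u v als w t))"
    by (simp add: apply_op_def sum_distrib_left algebra_simps)
  also have "\<dots> = (\<Sum>w\<in>{w. length w = n}. inverse q^2 * ((Kw q 1 w * f w) * Rop q u v als w t))"
    by (rule sum.cong[OF refl], simp only: Rop_comm[OF q], simp add: algebra_simps)
  also have "\<dots> = (\<Sum>w\<in>{w. length w = n}. inverse q^2 * (k1 * f w * Rop q u v als w t))"
    using K unfolding Keig_def by metis
  also have "\<dots> = inverse q^2 * k1 * apply_op n (Rop q u v als) f t"
    by (simp add: apply_op_def sum_distrib_left algebra_simps)
  finally show "Kw q 1 t * apply_op n (Rop q u v als) f t = inverse q^2 * k1 * apply_op n (Rop q u v als) f t" .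
qed

lemma Keig_L:
  assumes q: "q \<noteq> (0::'a::field)" and K: "Keig q f k0 k1"
  shows "Keig q (apply_op n (Lop q u v als) f) (inverse q^2 * k0) (q^2 * k1)"
  unfolding Keig_def
proof (intro allI conjI)
  fix t
  have "Kw q 0 t * apply_op n (Lop q u v als) f t = (\<Sum>w\<in>{w. length w = n}. f w * (Kw q 0 t * Lop q u v als w t))"
    by (simp add: apply_op_def sum_distrib_left algebra_simps)
  also have "\<dots> = (\<Sum>w\<in>{w. length w = n}. inverse q^2 * ((Kw q 0 w * f w) * Lop q u v als w t))"
    by (rule sum.cong[OF refl], simp only: Lop_comm[OF q], simp add: algebra_simps)
  also have "\<dots> = (\<Sum>w\<in>{w. length w = n}. inverse q^2 * (k0 * f w * Lop q u v als w t))"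
    using K unfolding Keig_def by metis
  also have "\<dots> = inverse q^2 * k0 * apply_op n (Lop q u v als) f t"
    by (simp add: apply_op_def sum_distrib_left algebra_simps)
  finally show "Kw q 0 t * apply_op n (Lop q u v als) f t = inverse q^2 * k0 * apply_op n (Lop q u v als) f t" .
  have "Kw q 1 t * apply_op n (Lop q u v als) f t = (\<Sum>w\<in>{w. length w = n}. f w * (Kw q 1 t * Lop q u v als w t))"
    by (simp add: apply_op_def sum_distrib_left algebra_simps)
  also have "\<dots> = (\<Sum>w\<in>{w. length w = n}. q^2 * ((Kw q 1 w * f w) * Lop q u v als w t))"
    by (rule sum.cong[OF refl], simp only: Lop_comm[OF q], simp add: algebra_simps)
  also have "\<dots> = (\<Sum>w\<in>{w. length w = n}. q^2 * (k1 * f w * Lop q u v als w t))"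
    using K unfolding Keig_def by metis
  also have "\<dots> = q^2 * k1 * apply_op n (Lop q u v als) f t"
    by (simp add: apply_op_def sum_distrib_left algebra_simps)
  finally show "Kw q 1 t * apply_op n (Lop q u v als) f t = q^2 * k1 * apply_op n (Lop q u v als) f t" .
qed

lemma Keig_R_pow:
  assumes q: "q \<noteq> (0::'a::field)" and K: "Keig q f k0 k1"
  shows "Keig q ((apply_op n (Rop q u v als) ^^ j) f) ((q^2)^j * k0) ((inverse q^2)^j * k1)"
proof (induction j)
  case 0 then show ?case using K by simp
next
  case (Suc j)
  have "Keig q (apply_op n (Rop q u v als) ((apply_op n (Rop q u v als) ^^ j) f)) (q^2 * ((q^2)^j * k0)) (inverse q^2 * ((inverse q^2)^j * k1))"
    by (rule Keig_R[OF q Suc.IH])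
  then show ?case by (simp add: mult.assoc)
qed

lemma Keig_L_pow:
  assumes q: "q \<noteq> (0::'a::field)" and K: "Keig q f k0 k1"
  shows "Keig q ((apply_op n (Lop q u v als) ^^ j) f) ((inverse q^2)^j * k0) ((q^2)^j * k1)"
proof (induction j)
  case 0 then show ?case using K by simp
next
  case (Suc j)
  have "Keig q (apply_op n (Lop q u v als) ((apply_op n (Lop q u v als) ^^ j) f)) (inverse q^2 * ((inverse q^2)^j * k0)) (q^2 * ((q^2)^j * k1))"
    by (rule Keig_L[OF q Suc.IH])
  then show ?case by (simp add: mult.assoc)
qed

lemma M_eig: "Keig q h k0 k1 \<Longrightarrow> h w * (c1 * Kw q 0 w + c2 * Kw q 1 w) = (c1*k0 + c2*k1) * h w"
proof -
  assume K: "Keig q h k0 k1"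
  have "h w * (c1 * Kw q 0 w + c2 * Kw q 1 w) = c1 * (Kw q 0 w * h w) + c2 * (Kw q 1 w * h w)"
    by (simp add: algebra_simps)
  also have "\<dots> = c1 * (k0 * h w) + c2 * (k1 * h w)" using K unfolding Keig_def by metis
  finally show ?thesis by (simp add: algebra_simps)
qed

lemma M_eig': "Keig q h k0 k1 \<Longrightarrow> h w * (c2 * Kw q 1 w + c1 * Kw q 0 w) = (c1*k0 + c2*k1) * h w"
  using M_eig[of q h k0 k1 w c1 c2] by (simp add: add.commute)

lemma Ev_scale: "Ev a (\<lambda>w. c * h w) t = c * Ev a h t"
  by (cases t) (auto simp: Ev_def)

lemma R_iter:
  assumes q: "q \<noteq> (0::'a::field)" and K: "Keig q g k0 k1"
  shows "length t = Suc m \<Longrightarrow> (apply_op (Suc m) (Rop q u v (al#als)) ^^ Suc i) (Ev True g) t =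
    Ev True ((apply_op m (Rop q u v als) ^^ Suc i) g) t
    + (\<Sum>j<Suc i. u*inverse q*al*((q^2)^j*k0) + v*q*((inverse q^2)^j*k1)) * Ev False ((apply_op m (Rop q u v als) ^^ i) g) t"
proof (induction i arbitrary: t)
  case 0
  have "(apply_op (Suc m) (Rop q u v (al#als)) ^^ Suc 0) (Ev True g) t =
    Ev True (apply_op m (Rop q u v als) g) t + Ev False (\<lambda>w. g w * (u*inverse q*al*Kw q 0 w + v*q*Kw q 1 w)) t"
    using R_True[OF q 0] by simp
  also have "(\<lambda>w. g w * (u*inverse q*al*Kw q 0 w + v*q*Kw q 1 w)) = (\<lambda>w. (u*inverse q*al*k0 + v*q*k1) * g w)"
    by (rule ext) (rule M_eig[OF K])
  finally show ?case by (simp add: Ev_scale)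
next
  case (Suc i)
  define R where "R = apply_op (Suc m) (Rop q u v (al#als))"
  define R' where "R' = apply_op m (Rop q u v als)"
  define C where "C = (\<Sum>j<Suc i. u*inverse q*al*((q^2)^j*k0) + v*q*((inverse q^2)^j*k1))"
  define A where "A = u*inverse q*al*((q^2)^Suc i*k0) + v*q*((inverse q^2)^Suc i*k1)"
  have IH: "\<And>t. length t = Suc m \<Longrightarrow> (R ^^ Suc i) (Ev True g) t = Ev True ((R' ^^ Suc i) g) t + C * Ev False ((R' ^^ i) g) t"
    using Suc.IH unfolding R_def R'_def C_def by blast
  have "(R ^^ Suc (Suc i)) (Ev True g) = R ((R ^^ Suc i) (Ev True g))" by simp
  also have "\<dots> = R (\<lambda>t. Ev True ((R' ^^ Suc i) g) t + C * Ev False ((R' ^^ i) g) t)"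
    unfolding R_def by (rule apply_op_resp) (use IH in \<open>simp add: R_def\<close>)
  also have "\<dots> = (\<lambda>t. R (Ev True ((R' ^^ Suc i) g)) t + C * R (Ev False ((R' ^^ i) g)) t)"
    unfolding R_def by (rule apply_op_lin)
  finally have e: "(R ^^ Suc (Suc i)) (Ev True g) t = R (Ev True ((R' ^^ Suc i) g)) t + C * R (Ev False ((R' ^^ i) g)) t" by simp
  have KX: "Keig q ((R' ^^ Suc i) g) ((q^2)^Suc i * k0) ((inverse q^2)^Suc i * k1)"
    unfolding R'_def by (rule Keig_R_pow[OF q K])
  have "R (Ev True ((R' ^^ Suc i) g)) t = Ev True (R' ((R' ^^ Suc i) g)) t + Ev False (\<lambda>w. (R' ^^ Suc i) g w * (u*inverse q*al*Kw q 0 w + v*q*Kw q 1 w)) t"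
    unfolding R_def R'_def by (rule R_True[OF q Suc.prems])
  also have "(\<lambda>w. (R' ^^ Suc i) g w * (u*inverse q*al*Kw q 0 w + v*q*Kw q 1 w)) = (\<lambda>w. A * (R' ^^ Suc i) g w)"
    by (rule ext) (subst M_eig[OF KX], simp add: A_def mult.assoc)
  finally have e1: "R (Ev True ((R' ^^ Suc i) g)) t = Ev True ((R' ^^ Suc (Suc i)) g) t + A * Ev False ((R' ^^ Suc i) g) t"
    by (simp add: Ev_scale)
  have e2: "R (Ev False ((R' ^^ i) g)) t = Ev False ((R' ^^ Suc i) g) t"
    unfolding R_def R'_def using R_False[OF q Suc.prems] by simp
  have "(R ^^ Suc (Suc i)) (Ev True g) t = Ev True ((R' ^^ Suc (Suc i)) g) t + (C + A) * Ev False ((R' ^^ Suc i) g) t"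
    using e e1 e2 by (simp add: algebra_simps)
  moreover have "C + A = (\<Sum>j<Suc (Suc i). u*inverse q*al*((q^2)^j*k0) + v*q*((inverse q^2)^j*k1))"
    unfolding C_def A_def by simp
  ultimately show ?case unfolding R_def R'_def by simp
qed

lemma L_iter:
  assumes q: "q \<noteq> (0::'a::field)" and K: "Keig q g k0 k1"
  shows "length t = Suc m \<Longrightarrow> (apply_op (Suc m) (Lop q u v (al#als)) ^^ Suc i) (Ev False g) t =
    Ev False ((apply_op m (Lop q u v als) ^^ Suc i) g) t
    + (\<Sum>j<Suc i. u*((q^2)^j*k1) + v*q*q*inverse al*((inverse q^2)^j*k0)) * Ev True ((apply_op m (Lop q u v als) ^^ i) g) t"
proof (induction i arbitrary: t)
  case 0
  have "(apply_op (Suc m) (Lop q u v (al#als)) ^^ Suc 0) (Ev False g) t =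
    Ev False (apply_op m (Lop q u v als) g) t + Ev True (\<lambda>w. g w * (u*Kw q 1 w + v*q*q*inverse al*Kw q 0 w)) t"
    using L_False[OF q 0] by simp
  also have "(\<lambda>w. g w * (u*Kw q 1 w + v*q*q*inverse al*Kw q 0 w)) = (\<lambda>w. (u*k1 + v*q*q*inverse al*k0) * g w)"
    by (rule ext) (subst M_eig'[OF K], simp add: algebra_simps)
  finally show ?case by (simp add: Ev_scale)
next
  case (Suc i)
  define R where "R = apply_op (Suc m) (Lop q u v (al#als))"
  define R' where "R' = apply_op m (Lop q u v als)"
  define C where "C = (\<Sum>j<Suc i. u*((q^2)^j*k1) + v*q*q*inverse al*((inverse q^2)^j*k0))"
  define A where "A = u*((q^2)^Suc i*k1) + v*q*q*inverse al*((inverse q^2)^Suc i*k0)"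
  have IH: "\<And>t. length t = Suc m \<Longrightarrow> (R ^^ Suc i) (Ev False g) t = Ev False ((R' ^^ Suc i) g) t + C * Ev True ((R' ^^ i) g) t"
    using Suc.IH unfolding R_def R'_def C_def by blast
  have "(R ^^ Suc (Suc i)) (Ev False g) = R ((R ^^ Suc i) (Ev False g))" by simp
  also have "\<dots> = R (\<lambda>t. Ev False ((R' ^^ Suc i) g) t + C * Ev True ((R' ^^ i) g) t)"
    unfolding R_def by (rule apply_op_resp) (use IH in \<open>simp add: R_def\<close>)
  also have "\<dots> = (\<lambda>t. R (Ev False ((R' ^^ Suc i) g)) t + C * R (Ev True ((R' ^^ i) g)) t)"
    unfolding R_def by (rule apply_op_lin)
  finally have e: "(R ^^ Suc (Suc i)) (Ev False g) t = R (Ev False ((R' ^^ Suc i) g)) t + C * R (Ev True ((R' ^^ i) g)) t" by simp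
  have KX: "Keig q ((R' ^^ Suc i) g) ((inverse q^2)^Suc i * k0) ((q^2)^Suc i * k1)"
    unfolding R'_def by (rule Keig_L_pow[OF q K])
  have "R (Ev False ((R' ^^ Suc i) g)) t = Ev False (R' ((R' ^^ Suc i) g)) t + Ev True (\<lambda>w. (R' ^^ Suc i) g w * (u*Kw q 1 w + v*q*q*inverse al*Kw q 0 w)) t"
    unfolding R_def R'_def by (rule L_False[OF q Suc.prems])
  also have "(\<lambda>w. (R' ^^ Suc i) g w * (u*Kw q 1 w + v*q*q*inverse al*Kw q 0 w)) = (\<lambda>w. A * (R' ^^ Suc i) g w)"
    by (rule ext) (subst M_eig'[OF KX], simp add: A_def mult.assoc)
  finally have e1: "R (Ev False ((R' ^^ Suc i) g)) t = Ev False ((R' ^^ Suc (Suc i)) g) t + A * Ev True ((R' ^^ Suc i) g) t"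
    by (simp add: Ev_scale)
  have e2: "R (Ev True ((R' ^^ i) g)) t = Ev True ((R' ^^ Suc i) g) t"
    unfolding R_def R'_def using L_True[OF q Suc.prems] by simp
  have "(R ^^ Suc (Suc i)) (Ev False g) t = Ev False ((R' ^^ Suc (Suc i)) g) t + (C + A) * Ev True ((R' ^^ Suc i) g) t"
    using e e1 e2 by (simp add: algebra_simps)
  moreover have "C + A = (\<Sum>j<Suc (Suc i). u*((q^2)^j*k1) + v*q*q*inverse al*((inverse q^2)^j*k0))"
    unfolding C_def A_def by simp
  ultimately show ?case unfolding R_def R'_def by simp
qed

lemma L_True_iter:
  assumes q: "q \<noteq> (0::'a::field)"
  shows "length t = Suc m \<Longrightarrow> (apply_op (Suc m) (Lop q u v (al#als)) ^^ Suc i) (Ev True g) t =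
    Ev True ((apply_op m (Lop q u v als) ^^ Suc i) g) t"
proof (induction i arbitrary: t)
  case 0 then show ?case using L_True[OF q] by simp
next
  case (Suc i)
  have "(apply_op (Suc m) (Lop q u v (al#als)) ^^ Suc (Suc i)) (Ev True g) =
     apply_op (Suc m) (Lop q u v (al#als)) ((apply_op (Suc m) (Lop q u v (al#als)) ^^ Suc i) (Ev True g))" by simp
  also have "\<dots> = apply_op (Suc m) (Lop q u v (al#als)) (Ev True ((apply_op m (Lop q u v als) ^^ Suc i) g))"
    by (rule apply_op_resp) (use Suc.IH in simp)
  finally show ?case using L_True[OF q Suc.prems] by simp
qed

lemma Keig_x0: "Keig q (bvec (replicate m True)) (inverse q ^ m) (q ^ m)"
  unfolding Keig_def bvec_def by (auto simp: Kw_def keig_def prod_list_replicate)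

lemma bvec_Suc: "bvec (replicate (Suc m) True) = Ev True (bvec (replicate m True))"
  by (rule ext) (auto simp: bvec_def Ev_def split: list.splits)

lemma zeta_0: "zeta q u v us vs als 0 = 1"
  by (simp add: zeta_def bvec_def)

lemma zeta_Suc:
  assumes q: "q \<noteq> (0::'a::field)" and m: "length als = m"
  shows "zeta q u v us vs (al#als) (Suc i) = zeta q u v us vs als (Suc i)
     + (\<Sum>j<Suc i. u*inverse q*al*((q^2)^j*inverse q^m) + v*q*((inverse q^2)^j*q^m))
     * (\<Sum>j<Suc i. us*((q^2)^j*((inverse q^2)^i*q^m)) + vs*q*q*inverse al*((inverse q^2)^j*((q^2)^i*inverse q^m)))
     * zeta q u v us vs als i"
proof -
  define R where "R = apply_op (Suc m) (Rop q u v (al#als))"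
  define R' where "R' = apply_op m (Rop q u v als)"
  define L where "L = apply_op (Suc m) (Lop q us vs (al#als))"
  define L' where "L' = apply_op m (Lop q us vs als)"
  define x' where "x' = (bvec (replicate m True) :: bool list \<Rightarrow> 'a)"
  define CA where "CA = (\<Sum>j<Suc i. u*inverse q*al*((q^2)^j*inverse q^m) + v*q*((inverse q^2)^j*q^m))"
  define DB where "DB = (\<Sum>j<Suc i. us*((q^2)^j*((inverse q^2)^i*q^m)) + vs*q*q*inverse al*((inverse q^2)^j*((q^2)^i*inverse q^m)))"
  define x0 where "x0 = True # replicate m True"
  have lx0: "length x0 = Suc m" by (simp add: x0_def)
  have Z1: "zeta q u v us vs (al#als) (Suc i) = (L ^^ Suc i) ((R ^^ Suc i) (Ev True x')) x0"
    by (simp add: zeta_def Let_def m L_def R_def x'_def x0_def bvec_Suc[symmetric] del: funpow.simps replicate.simps) (simp add: x0_def)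
  have Z2: "zeta q u v us vs als (Suc i) = (L' ^^ Suc i) ((R' ^^ Suc i) x') (replicate m True)"
    by (simp add: zeta_def Let_def m L'_def R'_def x'_def del: funpow.simps)
  have Z3: "zeta q u v us vs als i = (L' ^^ i) ((R' ^^ i) x') (replicate m True)"
    by (simp add: zeta_def Let_def m L'_def R'_def x'_def del: funpow.simps)
  have RI: "\<And>t. length t = Suc m \<Longrightarrow> (R ^^ Suc i) (Ev True x') t = Ev True ((R' ^^ Suc i) x') t + CA * Ev False ((R' ^^ i) x') t"
    unfolding R_def R'_def CA_def x'_def by (rule R_iter[OF q Keig_x0])
  have "(L ^^ Suc i) ((R ^^ Suc i) (Ev True x')) = (L ^^ Suc i) (\<lambda>t. Ev True ((R' ^^ Suc i) x') t + CA * Ev False ((R' ^^ i) x') t)"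
    unfolding L_def by (rule apply_op_pow_resp) (rule RI)
  also have "\<dots> = (\<lambda>t. (L ^^ Suc i) (Ev True ((R' ^^ Suc i) x')) t + CA * (L ^^ Suc i) (Ev False ((R' ^^ i) x')) t)"
    unfolding L_def by (rule apply_op_pow_lin)
  finally have e: "zeta q u v us vs (al#als) (Suc i) = (L ^^ Suc i) (Ev True ((R' ^^ Suc i) x')) x0 + CA * (L ^^ Suc i) (Ev False ((R' ^^ i) x')) x0"
    using Z1 by simp
  have e1: "(L ^^ Suc i) (Ev True ((R' ^^ Suc i) x')) x0 = zeta q u v us vs als (Suc i)"
    unfolding Z2 L_def L'_def using L_True_iter[OF q lx0] by (simp add: x0_def del: funpow.simps)
  have KZ: "Keig q ((R' ^^ i) x') ((q^2)^i * inverse q^m) ((inverse q^2)^i * q^m)"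
    unfolding R'_def x'_def by (rule Keig_R_pow[OF q Keig_x0])
  have e2: "(L ^^ Suc i) (Ev False ((R' ^^ i) x')) x0 = DB * zeta q u v us vs als i"
    unfolding Z3 L_def L'_def DB_def using L_iter[OF q KZ lx0] by (simp add: x0_def del: funpow.simps)
  show ?thesis using e e1 e2 unfolding CA_def DB_def by (simp add: mult.assoc)
qed

lemma zeta_Nil: "zeta q u v us vs [] (Suc i) = (0::'a::field)"
proof -
  have "apply_op 0 (Rop q u v []) f = (\<lambda>t. 0)" for f :: "bool list \<Rightarrow> 'a"
    by (rule ext) (simp add: apply_op_def Rop_def)
  then have "(apply_op 0 (Rop q u v []) ^^ Suc i) (bvec []) = (\<lambda>t. 0)" by simp
  then show ?thesis by (simp add: zeta_def apply_op_pow_zero del: funpow.simps)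
qed


lemma alg_core:
  fixes q P K al u v us vs :: "'a::field"
  assumes q: "q \<noteq> 0" and P: "P \<noteq> 0" and K: "K \<noteq> 0" and al: "al \<noteq> 0" and q2: "q^2 \<noteq> 1"
  shows "(u*inverse q*al*inverse (P*K) * ((q^2*P^2 - 1)/(q^2-1)) + v*q*(P*K) * ((inverse (q^2*P^2) - 1)/(inverse (q^2) - 1)))
       * (us*(K/P) * ((q^2*P^2 - 1)/(q^2-1)) + vs*q*q*inverse al*(P/K) * ((inverse (q^2*P^2) - 1)/(inverse (q^2) - 1)))
     = (q*P - inverse (q*P))^2 / (q - inverse q)^2 * (u*us*al/q + u*vs*q/K^2 + v*us*q*K^2 + v*vs*q^3/al)"
proof -
  have a: "q^2 - 1 \<noteq> 0" using q2 by simp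
  have b: "inverse (q^2) - 1 \<noteq> 0" using q2 q by (simp add: field_simps)
  have c: "q - inverse q \<noteq> 0" using q2 q by (simp add: field_simps power2_eq_square)
  define G where "G = (q^2*P^2 - 1)/(q^2-1)"
  have h1: "(inverse (q^2*P^2) - 1)/(inverse (q^2) - 1) = G / P^2"
  proof -
    have d: "1 - q^2 \<noteq> 0" using q2 by (metis eq_iff_diff_eq_0)
    have e1: "inverse (q^2*P^2) - 1 = (1 - q^2*P^2)/(q^2*P^2)" using q P by (simp add: field_simps)
    have e2: "inverse (q^2) - 1 = (1 - q^2)/q^2" using q by (simp add: field_simps)
    have "(inverse (q^2*P^2) - 1)/(inverse (q^2) - 1) = (1 - q^2*P^2)/(P^2*(1 - q^2))"
    proof -
      have "(1 - q^2*P^2)/(q^2*P^2) / ((1 - q^2)/q^2) = (q^2*(1 - q^2*P^2))/(q^2*(P^2*(1 - q^2)))"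
        by (simp add: divide_divide_times_eq ac_simps)
      also have "\<dots> = (1 - q^2*P^2)/(P^2*(1 - q^2))"
        using q by (rule mult_divide_mult_cancel_left[OF power_not_zero])
      finally show ?thesis unfolding e1 e2 .
    qed
    also have "\<dots> = G / P^2" unfolding G_def using a d P by (simp add: field_simps)
    finally show ?thesis .
  qed
  have h2: "(q*P - inverse (q*P))^2 / (q - inverse q)^2 = G^2 / P^2"
  proof -
    have "(q*P - inverse (q*P)) / (q - inverse q) = G / P"
      unfolding G_def using q P a c by (simp add: field_simps power2_eq_square)
    then show ?thesis by (metis power_divide)
  qed
  show ?thesis unfolding h1 h2 G_def[symmetric] using q P K al
    by (simp add: field_simps power2_eq_square) (simp add: algebra_simps power3_eq_cube)
qed
definition rr :: "'a::field \<Rightarrow> 'a \<Rightarrow> 'a \<Rightarrow> 'a \<Rightarrow> 'a \<Rightarrow> 'a \<Rightarrow> 'a" where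
  "rr q u v us vs al = (u*us*inverse q*al + v*vs*q^3*inverse al)/(q - inverse q)^2"

lemma CADB:
  fixes q b c bs cs u v us vs al :: "'a::field"
  assumes q: "q \<noteq> 0" and q2: "q^2 \<noteq> 1" and al: "al \<noteq> 0"
    and uv: "u * vs = - b * bs * inverse q * (q - inverse q) ^ 2"
    and vu: "v * us = - c * cs * inverse q * (q - inverse q) ^ 2"
    and m: "m = i + k"
  shows "(\<Sum>j<Suc i. u*inverse q*al*((q^2)^j*inverse q^m) + v*q*((inverse q^2)^j*q^m))
     * (\<Sum>j<Suc i. us*((q^2)^j*((inverse q^2)^i*q^m)) + vs*q*q*inverse al*((inverse q^2)^j*((q^2)^i*inverse q^m)))
     = (q^(Suc i) - inverse q^(Suc i))^2 * (rr q u v us vs al - (b * bs * inverse q ^ (2 * k) + c * cs * q ^ (2 * k)))"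
proof -
  define P where "P = q^i"
  define K where "K = q^k"
  have P: "P \<noteq> 0" and K: "K \<noteq> 0" using q by (simp_all add: P_def K_def)
  have c: "q - inverse q \<noteq> 0" using q2 q by (simp add: field_simps power2_eq_square)
  have i2: "inverse q ^ 2 \<noteq> 1" using q2 q by (simp add: power_inverse)
  define S1 where "S1 = (q^2*P^2 - 1)/(q^2-1)"
  define S2 where "S2 = (inverse (q^2*P^2) - 1)/(inverse (q^2) - 1)"
  have pp: "(q^2)^i = P^2" unfolding P_def by (metis power_mult mult.commute)
  have s1: "(\<Sum>j<Suc i. (q^2)^j) = S1" unfolding S1_def
    by (subst geometric_sum[OF q2]) (simp add: pp)
  have s2: "(\<Sum>j<Suc i. (inverse q^2)^j) = S2" unfolding S2_def
    by (subst geometric_sum[OF i2]) (simp add: power_inverse pp)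
  have qm: "q^m = P*K" "inverse q^m = inverse (P*K)" unfolding P_def K_def m by (simp_all add: power_add power_inverse)
  have x1: "(inverse q^2)^i*q^m = K/P" unfolding qm P_def K_def
    using q by (simp add: power_inverse power_mult[symmetric] field_simps power2_eq_square mult.commute power_mult_distrib)
  have x2: "(q^2)^i*inverse q^m = P/K" unfolding qm P_def K_def
    using q by (simp add: power_inverse power_mult[symmetric] field_simps power2_eq_square mult.commute power_mult_distrib)
  have CA: "(\<Sum>j<Suc i. u*inverse q*al*((q^2)^j*inverse q^m) + v*q*((inverse q^2)^j*q^m))
     = u*inverse q*al*inverse (P*K) * S1 + v*q*(P*K) * S2"
    by (simp add: sum.distrib sum_distrib_left[symmetric] sum_distrib_right[symmetric] s1 s2 qm mult_ac del: sum.lessThan_Suc)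
  have DB: "(\<Sum>j<Suc i. us*((q^2)^j*((inverse q^2)^i*q^m)) + vs*q*q*inverse al*((inverse q^2)^j*((q^2)^i*inverse q^m)))
     = us*(K/P) * S1 + vs*q*q*inverse al*(P/K) * S2"
  proof -
    have g: "\<And>X1 X2. (\<Sum>j<Suc i. us*((q^2)^j*X1) + vs*q*q*inverse al*((inverse q^2)^j*X2)) = us*X1*S1 + vs*q*q*inverse al*X2*S2"
      by (simp add: sum.distrib sum_distrib_left[symmetric] sum_distrib_right[symmetric] s1 s2 mult_ac del: sum.lessThan_Suc)
    show ?thesis unfolding x1 x2 by (rule g)
  qed
  have core: "(u*inverse q*al*inverse (P*K) * S1 + v*q*(P*K) * S2) * (us*(K/P) * S1 + vs*q*q*inverse al*(P/K) * S2)
     = (q*P - inverse (q*P))^2 / (q - inverse q)^2 * (u*us*al/q + u*vs*q/K^2 + v*us*q*K^2 + v*vs*q^3/al)"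
    unfolding S1_def S2_def by (rule alg_core[OF q P K al q2])
  have fin: "(q*P - inverse (q*P))^2 / (q - inverse q)^2 * (u*us*al/q + u*vs*q/K^2 + v*us*q*K^2 + v*vs*q^3/al)
     = (q^(Suc i) - inverse q^(Suc i))^2 * (rr q u v us vs al - (b * bs * inverse q ^ (2 * k) + c * cs * q ^ (2 * k)))"
  proof -
    have hb: "u*vs*q/K^2 / (q - inverse q)^2 = - (b * bs * inverse q ^ (2 * k))"
      unfolding uv K_def using q c by (simp add: field_simps power_mult power_inverse)
    have hc: "v*us*q*K^2 / (q - inverse q)^2 = - (c * cs * q ^ (2 * k))"
      unfolding vu K_def using q c by (simp add: field_simps power_mult)
    have ha: "(u*us*al/q + v*vs*q^3/al) / (q - inverse q)^2 = rr q u v us vs al"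
      unfolding rr_def by (simp add: field_simps)
    have hP: "q*P = q^(Suc i)" "inverse (q*P) = inverse q^(Suc i)" unfolding P_def by (simp_all add: power_inverse)
    have ab: "\<And>Z D a b c d::'a. Z / D * (a + b + c + d) = Z * ((a+d)/D + b/D + c/D)"
      by (simp add: add_divide_distrib algebra_simps)
    have "(q*P - inverse (q*P))^2 / (q - inverse q)^2 * (u*us*al/q + u*vs*q/K^2 + v*us*q*K^2 + v*vs*q^3/al)
       = (q*P - inverse (q*P))^2 * ((u*us*al/q + v*vs*q^3/al) / (q - inverse q)^2 + u*vs*q/K^2 / (q - inverse q)^2 + v*us*q*K^2 / (q - inverse q)^2)"
      by (rule ab)
    also have "\<dots> = (q*P - inverse (q*P))^2 * (rr q u v us vs al + - (b * bs * inverse q ^ (2 * k)) + - (c * cs * q ^ (2 * k)))"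
      by (simp only: ha hb hc)
    also have "\<dots> = (q^(Suc i) - inverse q^(Suc i))^2 * (rr q u v us vs al - (b * bs * inverse q ^ (2 * k) + c * cs * q ^ (2 * k)))"
      by (simp only: hP) (simp add: algebra_simps power_inverse)
    finally show ?thesis .
  qed
  show ?thesis using CA DB core fin by simp
qed

lemma poly_aux: "smult s (p * [:t, -1:]) + smult ((r - t) * s) p = smult s p * [:r, -1::'a::field:]"
proof -
  have e: "[:r, -1:] = [:t,-1:] + [:r - t:]" by simp
  have "smult s p * [:r, -1:] = smult s p * [:t,-1:] + smult s p * [:r - t:]"
    unfolding e by (rule distrib_left)
  also have "smult s p * [:r - t:] = smult ((r - t) * s) p" by (simp add: mult.commute)
  also have "smult s p * [:t,-1:] = smult s (p * [:t, -1:])" by (rule mult_smult_left)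
  finally show ?thesis by simp
qed
lemma sign_aux: "smult ((-1)^Suc m) (T * [:r, -1:]) = [:-r, 1::'a::field:] * smult ((-1)^m) T"
proof -
  have e: "[:r, -1:] = smult (-1) [:-r, 1::'a:]" by simp
  have "smult ((-1)^Suc m) (T * [:r, -1:]) = smult ((-1)^Suc m) (smult (-1) (T * [:-r, 1:]))"
    unfolding e by (simp only: mult_smult_right)
  also have "\<dots> = smult ((-1)^m) (T * [:-r, 1:])"
  proof -
    have "(-1::'a)^Suc m * -1 = (-1)^m" by simp
    then show ?thesis by (simp only: smult_smult)
  qed
  also have "\<dots> = [:-r, 1::'a:] * smult ((-1)^m) T" by (simp only: mult_smult_right mult.commute)
  finally show ?thesis .
qed


lemma zeta_vanish:
  assumes q: "q \<noteq> (0::'a::field)"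
  shows "i > length als \<Longrightarrow> zeta q u v us vs als i = 0"
proof (induction als arbitrary: i)
  case Nil then obtain i' where "i = Suc i'" by (cases i) auto
  then show ?case by (simp add: zeta_Nil)
next
  case (Cons al als)
  then obtain i' where i: "i = Suc i'" by (cases i) auto
  have "zeta q u v us vs als (Suc i') = 0" "zeta q u v us vs als i' = 0"
    using Cons i by auto
  then show ?case unfolding i using zeta_Suc[OF q refl, of u v us vs al als i'] by simp
qed

lemma feas_nz:
  assumes q: "q \<noteq> (0::'a::field)" and f: "q ^ (2 * n) \<noteq> 1"
  shows "q ^ n - inverse q ^ n \<noteq> 0"
proof
  assume "q ^ n - inverse q ^ n = 0"
  then have "q ^ n * q ^ n = q ^ n * inverse q ^ n" by simp
  also have "\<dots> = 1" using q by (simp add: power_inverse)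
  also have "q ^ n * q ^ n = q ^ (2 * n)" by (simp add: mult_2 power_add)
  finally show False using f by simp
qed

lemma sigma_rec:
  fixes q b c bs cs u v us vs al :: "'a::field"
  assumes q: "q \<noteq> 0" and q2: "q^2 \<noteq> 1" and al: "al \<noteq> 0"
    and uv: "u * vs = - b * bs * inverse q * (q - inverse q) ^ 2"
    and vu: "v * us = - c * cs * inverse q * (q - inverse q) ^ 2"
    and feas: "feasible q (Suc m)" and m: "length als = m" and k: "k \<le> Suc m"
  shows "sigma q u v us vs (al#als) k = sigma q u v us vs als k
     + (if k = 0 then 0 else (rr q u v us vs al - (b * bs * inverse q ^ (2 * (Suc m - k)) + c * cs * q ^ (2 * (Suc m - k)))) * sigma q u v us vs als (k - 1))"
proof (cases k)
  case 0 then show ?thesis by (simp add: sigma_def zeta_0)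
next
  case (Suc i)
  have im: "m = i + (m - i)" using k Suc by simp
  define E where "E = (q^(Suc i) - inverse q^(Suc i))^2"
  define g where "g = rr q u v us vs al - (b * bs * inverse q ^ (2 * (m - i)) + c * cs * q ^ (2 * (m - i)))"
  define D where "D = (\<Prod>k=1..i. (q ^ k - inverse q ^ k) ^ 2)"
  have fe: "q ^ (2 * Suc i) \<noteq> 1" using feas k Suc unfolding feasible_def by (metis atLeastAtMost_iff le_add1 plus_1_eq_Suc)
  have E: "E \<noteq> 0" unfolding E_def using feas_nz[OF q fe] by simp
  have DS: "(\<Prod>k=1..Suc i. (q ^ k - inverse q ^ k) ^ 2) = D * E"
    unfolding D_def E_def by (simp add: prod.cl_ivl_Suc)
  have z: "zeta q u v us vs (al#als) (Suc i) = zeta q u v us vs als (Suc i) + E * g * zeta q u v us vs als i"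
    using zeta_Suc[OF q m, of u v us vs al i] CADB[OF q q2 al uv vu im] unfolding E_def g_def by simp
  have "sigma q u v us vs (al#als) (Suc i) = (zeta q u v us vs als (Suc i) + E * g * zeta q u v us vs als i) / (D * E)"
    unfolding sigma_def DS z ..
  also have "\<dots> = sigma q u v us vs als (Suc i) + g * sigma q u v us vs als i"
    unfolding sigma_def DS D_def[symmetric] using E by (simp add: add_divide_distrib)
  finally show ?thesis using Suc by (simp add: g_def)
qed

lemma dp_rec:
  fixes q b c bs cs u v us vs al :: "'a::field"
  assumes q: "q \<noteq> 0" and q2: "q^2 \<noteq> 1" and al: "al \<noteq> 0"
    and uv: "u * vs = - b * bs * inverse q * (q - inverse q) ^ 2"
    and vu: "v * us = - c * cs * inverse q * (q - inverse q) ^ 2"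
    and feas: "feasible q (Suc m)" and m: "length als = m"
  shows "drinfeld_poly q b c bs cs u v us vs (al#als) = [:- rr q u v us vs al, 1:] * drinfeld_poly q b c bs cs u v us vs als"
proof -
  define F where "F i = (\<Prod>j<i. fpoly q b c bs cs j)" for i
  define th where "th j = b * bs * inverse q ^ (2 * j) + c * cs * q ^ (2 * j)" for j
  define sV where "sV = sigma q u v us vs (al#als)"
  define sW where "sW = sigma q u v us vs als"
  define r where "r = rr q u v us vs al"
  define TW where "TW = (\<Sum>i=0..m. smult (sW (m - i)) (F i))"
  have fp: "fpoly q b c bs cs j = [:th j, -1:]" for j by (simp add: fpoly_def th_def)
  have rec: "sV k = sW k + (if k = 0 then 0 else (r - th (Suc m - k)) * sW (k - 1))" if "k \<le> Suc m" for k
    using sigma_rec[OF q q2 al uv vu feas m that] unfolding sV_def sW_def r_def th_def by simp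
  have s0: "sW (Suc m) = 0" unfolding sW_def sigma_def using zeta_vanish[OF q, of als "Suc m"] m by simp
  have "(\<Sum>i=0..Suc m. smult (sV (Suc m - i)) (F i)) =
        (\<Sum>i=0..Suc m. smult (sW (Suc m - i)) (F i) + (if i = Suc m then 0 else smult ((r - th i) * sW (m - i)) (F i)))"
  proof (rule sum.cong[OF refl])
    fix i assume "i \<in> {0..Suc m}"
    then have i: "i \<le> Suc m" by simp
    show "smult (sV (Suc m - i)) (F i) = smult (sW (Suc m - i)) (F i) + (if i = Suc m then 0 else smult ((r - th i) * sW (m - i)) (F i))"
      using rec[of "Suc m - i"] i by (cases "i = Suc m") (simp_all add: smult_add_left Suc_diff_le)
  qed
  also have "\<dots> = (\<Sum>i=0..Suc m. smult (sW (Suc m - i)) (F i)) + (\<Sum>i=0..Suc m. (if i = Suc m then 0 else smult ((r - th i) * sW (m - i)) (F i)))"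
    by (rule sum.distrib)
  also have "(\<Sum>i=0..Suc m. smult (sW (Suc m - i)) (F i)) = (\<Sum>i=0..m. smult (sW (m - i)) (F (Suc i)))"
    by (subst sum.atLeast0_atMost_Suc_shift) (simp add: s0)
  also have "(\<Sum>i=0..Suc m. (if i = Suc m then 0 else smult ((r - th i) * sW (m - i)) (F i))) = (\<Sum>i=0..m. smult ((r - th i) * sW (m - i)) (F i))"
    by (subst sum.atLeast0_atMost_Suc) (auto intro!: sum.cong)
  also have "(\<Sum>i=0..m. smult (sW (m - i)) (F (Suc i))) + (\<Sum>i=0..m. smult ((r - th i) * sW (m - i)) (F i))
      = (\<Sum>i=0..m. smult (sW (m - i)) (F i) * [:r, -1:])"
    unfolding sum.distrib[symmetric]
  proof (rule sum.cong[OF refl])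
    fix i
    have "F (Suc i) = F i * [:th i, -1:]" by (simp add: F_def fp)
    then show "smult (sW (m - i)) (F (Suc i)) + smult ((r - th i) * sW (m - i)) (F i) = smult (sW (m - i)) (F i) * [:r, -1:]"
      by (simp only: poly_aux)
  qed
  also have "\<dots> = TW * [:r, -1:]" unfolding TW_def by (rule sum_distrib_right[symmetric])
  finally have TV: "(\<Sum>i=0..Suc m. smult (sV (Suc m - i)) (F i)) = TW * [:r, -1:]" .
  have "drinfeld_poly q b c bs cs u v us vs (al#als) = smult ((-1)^Suc m) (\<Sum>i=0..Suc m. smult (sV (Suc m - i)) (F i))"
    unfolding drinfeld_poly_def Let_def sV_def F_def using m by simp
  also have "\<dots> = smult ((-1)^Suc m) (TW * [:r, -1:])" unfolding TV ..
  also have "\<dots> = [:-r, 1:] * smult ((-1)^m) TW" by (rule sign_aux)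
  also have "smult ((-1)^m) TW = drinfeld_poly q b c bs cs u v us vs als"
    unfolding drinfeld_poly_def Let_def TW_def sW_def F_def using m by simp
  finally show ?thesis unfolding r_def .
qed



lemma dp_nil: "drinfeld_poly q b c bs cs u v us vs [] = (1::'a::field poly)"
  by (simp add: drinfeld_poly_def sigma_def zeta_0)

lemma feasible_mono: "feasible q (Suc m) \<Longrightarrow> feasible q m"
  unfolding feasible_def by auto

lemma solve_rr:
  fixes q u v us vs z :: "'a::field"
  assumes alg_closed: "\<forall>p :: 'a poly. degree p > 0 \<longrightarrow> (\<exists>z. poly p z = 0)"
    and q: "q \<noteq> 0" and c: "q - inverse q \<noteq> 0" and nz: "u * us \<noteq> 0" "v * vs \<noteq> 0"
  shows "\<exists>al. al \<noteq> 0 \<and> rr q u v us vs al = z"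
proof -
  define p where "p = [: v*vs*q^3, -z*(q - inverse q)^2, u*us*inverse q :]"
  have "degree p = 2" unfolding p_def using nz q by simp
  then obtain al where r: "poly p al = 0" using alg_closed by fastforce
  then have e: "v*vs*q^3 + al * (-z*(q - inverse q)^2 + al * (u*us*inverse q)) = 0"
    unfolding p_def by simp
  have al: "al \<noteq> 0" using e nz q by auto
  have "rr q u v us vs al = z"
    unfolding rr_def using al c e q by (simp add: field_simps)
  then show ?thesis using al by blast
qed

theorem proposition7p16:
  fixes q b c bs cs u v us vs :: "'a::field" and d :: nat and P :: "'a poly"
  assumes alg_closed: "\<forall>p :: 'a poly. degree p > 0 \<longrightarrow> (\<exists>z. poly p z = 0)"
    and q: "q \<noteq> 0" "q ^ 2 \<noteq> 1"
    and nz: "b \<noteq> 0" "c \<noteq> 0" "bs \<noteq> 0" "cs \<noteq> 0"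
    and uv: "u * vs = - b * bs * inverse q * (q - inverse q) ^ 2"
    and vu: "v * us = - c * cs * inverse q * (q - inverse q) ^ 2"
    and feas: "feasible q d"
    and monic: "lead_coeff P = 1" "degree P = d"
  shows "\<exists>als :: 'a list. length als = d \<and> (\<forall>al\<in>set als. al \<noteq> 0) \<and>
           drinfeld_poly q b c bs cs u v us vs als = P"
proof -
  have cq: "q - inverse q \<noteq> 0" using q by (simp add: field_simps power2_eq_square)
  have uvs: "u * vs \<noteq> 0" unfolding uv using nz q cq by simp
  have vus: "v * us \<noteq> 0" unfolding vu using nz q cq by simp
  have nz2: "u * us \<noteq> 0" "v * vs \<noteq> 0" using uvs vus by auto
  show ?thesis using feas monic
  proof (induction d arbitrary: P)
    case 0
    have "P = [:coeff P 0:]" using 0 by (metis degree_0_id)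
    then have "P = 1" using 0 by (metis one_pCons)
    then show ?case using dp_nil by fastforce
  next
    case (Suc m)
    then have "degree P > 0" by simp
    then obtain z where "poly P z = 0" using alg_closed by blast
    then have "[:-z, 1:] dvd P" by (simp add: poly_eq_0_iff_dvd)
    then obtain Q where PQ: "P = [:-z, 1:] * Q" by (elim dvdE)
    have Q0: "Q \<noteq> 0" using PQ Suc.prems by auto
    have "degree P = degree [:-z, 1:] + degree Q" unfolding PQ by (rule degree_mult_eq) (use Q0 in auto)
    then have dQ: "degree Q = m" using Suc.prems by simp
    have "lead_coeff P = lead_coeff [:-z, 1:] * lead_coeff Q" unfolding PQ by (rule lead_coeff_mult)
    then have lQ: "lead_coeff Q = 1" using Suc.prems by simp
    obtain als where als: "length als = m" "\<forall>al\<in>set als. al \<noteq> 0" "drinfeld_poly q b c bs cs u v us vs als = Q"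
      using Suc.IH[OF feasible_mono[OF Suc.prems(1)] lQ dQ] by blast
    obtain al where al: "al \<noteq> 0" "rr q u v us vs al = z"
      using solve_rr[OF alg_closed q(1) cq nz2] by blast
    have "drinfeld_poly q b c bs cs u v us vs (al#als) = [:- rr q u v us vs al, 1:] * drinfeld_poly q b c bs cs u v us vs als"
      by (rule dp_rec[OF q al(1) uv vu Suc.prems(1) als(1)])
    then have "drinfeld_poly q b c bs cs u v us vs (al#als) = P" using al(2) als(3) PQ by simp
    then show ?case using als al by (intro exI[of _ "al#als"]) auto
  qed
qed


end
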